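(* There exists $\theta_2\in(0,\pi/2)$, depending only on $\alpha$, such that $\mathcal Q(z,\pi(p),\theta)\subset B(p,r_p)$ for all $0<\theta\le\theta_2$, all $p\in\mathbb H\setminus\{0\}$ and all $z\in\mathbb R$ with $|z-z_p|\le|z_p|$.
   Context: $\mathbb H=\mathbb R^3$, $p=(x_p,y_p,z_p)$, group law $(x,y,z)\cdot(x',y',z')=(x+x',y+y',z+z'+\tfrac12(xy'-yx'))$, dilations $\delta_\lambda(x,y,z)=(\lambda x,\lambda y,\lambda^2z)$. Fix $\alpha>0$ such that $d_\alpha(p,q)=\inf\{r>0:\delta_{1/r}(p^{-1}\cdot q)\in B_\alpha\}$ is a distance, $B_\alpha$ the closed Euclidean ball of radius $\alpha$ at $0$. $B(p,r)=\{q:d_\alpha(q,p)\le r\}$, $r_p=d_\alpha(0,p)$. For $p\in\mathbb H$, $z\in\mathbb R$ and $\theta\in(0,\pi/2)$, $\mathcal Q(z,\pi(p),\theta)$ is the Euclidean convex hull in $\mathbb R^3$ of the four points $(0,0,z)$, $(x_p-y_p\tan\theta,\ y_p+x_p\tan\theta,\ z)$, $(x_p+y_p\tan\theta,\ y_p-x_p\tan\theta,\ z)$ and $(2x_p,2y_p,z)$. *)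

theory Defs
  imports "HOL-Analysis.Analysis"
begin

type_synonym heis = "real \<times> real \<times> real"

definition hx :: "heis \<Rightarrow> real" where "hx p = fst p"
definition hy :: "heis \<Rightarrow> real" where "hy p = fst (snd p)"
definition hz :: "heis \<Rightarrow> real" where "hz p = snd (snd p)"

definition hmult :: "heis \<Rightarrow> heis \<Rightarrow> heis" where
  "hmult p q = (hx p + hx q, hy p + hy q, hz p + hz q + (hx p * hy q - hy p * hx q) / 2)"

definition hinv :: "heis \<Rightarrow> heis" where
  "hinv p = (- hx p, - hy p, - hz p)"

definition hdil :: "real \<Rightarrow> heis \<Rightarrow> heis" where
  "hdil l p = (l * hx p, l * hy p, l\<^sup>2 * hz p)"

definition Balpha :: "real \<Rightarrow> heis set" where
  "Balpha \<alpha> = {q. (hx q)\<^sup>2 + (hy q)\<^sup>2 + (hz q)\<^sup>2 \<le> \<alpha>\<^sup>2}"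

definition d_alpha :: "real \<Rightarrow> heis \<Rightarrow> heis \<Rightarrow> real" where
  "d_alpha \<alpha> p q = Inf {r. r > 0 \<and> hdil (1 / r) (hmult (hinv p) q) \<in> Balpha \<alpha>}"

definition is_distance :: "(heis \<Rightarrow> heis \<Rightarrow> real) \<Rightarrow> bool" where
  "is_distance d \<longleftrightarrow>
     (\<forall>p q. d p q = 0 \<longleftrightarrow> p = q) \<and>
     (\<forall>p q. d p q = d q p) \<and>
     (\<forall>p q r. d p q \<le> d p r + d r q)"

definition hball :: "real \<Rightarrow> heis \<Rightarrow> real \<Rightarrow> heis set" where
  "hball \<alpha> p r = {q. d_alpha \<alpha> q p \<le> r}"

definition r_pt :: "real \<Rightarrow> heis \<Rightarrow> real" where
  "r_pt \<alpha> p = d_alpha \<alpha> 0 p"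

definition Qset :: "real \<Rightarrow> heis \<Rightarrow> real \<Rightarrow> heis set" where
  "Qset z p \<theta> = convex hull
     {(0, 0, z),
      (hx p - hy p * tan \<theta>, hy p + hx p * tan \<theta>, z),
      (hx p + hy p * tan \<theta>, hy p - hx p * tan \<theta>, z),
      (2 * hx p, 2 * hy p, z)}"

end

theory Submission imports Defs begin
lemma core: fixes X Y e t \<alpha> s :: real
  assumes X: "X \<ge> 0" and e: "\<bar>e\<bar> \<le> Y" and XY: "X + Y^2 \<le> \<alpha>^2" and t: "t \<ge> 0" "t \<le> 1"
    and ta: "t*(1+\<alpha>+\<alpha>^2/4) \<le> 1" and a: "\<alpha> > 0" and s: "\<bar>s\<bar> = 1"
  shows "t^2*X + (e + s*t*X/2)^2 \<le> \<alpha>^2"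
proof -
  have Y0: "Y \<ge> 0" using e by linarith
  have "Y^2 \<le> \<alpha>^2" using XY X by linarith
  hence Ya: "Y \<le> \<alpha>" by (rule power2_le_imp_le) (use a in linarith)
  have Xa: "X \<le> \<alpha>^2" using XY zero_le_power2[of Y] by linarith
  have s2: "s * s = 1" using s by (metis abs_mult_self_eq mult_1_right)
  have "(e + s*t*X/2)^2 = e^2 + s*t*X*e + (s * s)*t^2*X^2/4"
    by (simp add: power2_eq_square algebra_simps)
  hence E: "(e + s*t*X/2)^2 = e^2 + s*t*X*e + t^2*X^2/4" using s2 by simp
  have A: "e^2 \<le> Y^2" using e by (metis abs_ge_zero power2_abs power_mono)
  have B: "s*t*X*e \<le> t*X*\<alpha>"
  proof -
    have "s*t*X*e \<le> \<bar>s*t*X*e\<bar>" by simp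
    also have "\<dots> = t*X*\<bar>e\<bar>" using s t X by (simp add: abs_mult)
    also have "\<dots> \<le> t*X*\<alpha>" using e Ya t X by (intro mult_left_mono) auto
    finally show ?thesis .
  qed
  have C: "t^2*X^2/4 \<le> t^2*X*\<alpha>^2/4"
  proof -
    have "X*X \<le> X*\<alpha>^2" using Xa X by (simp add: mult_left_mono)
    hence "t^2*(X*X) \<le> t^2*(X*\<alpha>^2)" by (simp add: mult_left_mono)
    thus ?thesis by (simp add: power2_eq_square algebra_simps)
  qed
  have D: "t^2 + t*\<alpha> + t^2*\<alpha>^2/4 \<le> t*(1+\<alpha>+\<alpha>^2/4)"
  proof -
    have tt: "t^2 \<le> t" using t by (simp add: power2_eq_square mult_left_le)
    have "t^2*\<alpha>^2 \<le> t*\<alpha>^2" using tt by (simp add: mult_right_mono)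
    thus ?thesis using tt by (simp add: algebra_simps)
  qed
  have F: "X*(t^2 + t*\<alpha> + t^2*\<alpha>^2/4) \<le> X*1"
    using D ta X by (meson order_trans mult_left_mono)
  have G: "X*(t^2 + t*\<alpha> + t^2*\<alpha>^2/4) = t^2*X + t*X*\<alpha> + t^2*X*\<alpha>^2/4"
    by (simp add: algebra_simps)
  show ?thesis using E A B C F G XY by linarith
qed

lemma sqc: fixes m n A B :: real assumes "m\<ge>0" "n\<ge>0" "m+n=1"
  shows "(m*A+n*B)^2 \<le> m*A^2+n*B^2"
proof -
  have n: "n = 1 - m" using assms by simp
  have "m*A^2+n*B^2 - (m*A+n*B)^2 = m*n*(A-B)^2"
    unfolding n by (simp add: power2_eq_square algebra_simps)
  moreover have "m*n*(A-B)^2 \<ge> 0" using assms by simp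
  ultimately show ?thesis by linarith
qed

definition L1 :: "real \<Rightarrow> heis \<Rightarrow> heis \<Rightarrow> real" where
  "L1 u p q = u*(hx p - hx q)"
definition L2 :: "real \<Rightarrow> heis \<Rightarrow> heis \<Rightarrow> real" where
  "L2 u p q = u*(hy p - hy q)"
definition L3 :: "real \<Rightarrow> heis \<Rightarrow> heis \<Rightarrow> real" where
  "L3 u p q = u^2*(hz p - hz q + (hx p*hy q - hy p*hx q)/2)"
definition Gf :: "real \<Rightarrow> heis \<Rightarrow> heis \<Rightarrow> real" where
  "Gf u p q = (L1 u p q)^2 + (L2 u p q)^2 + (L3 u p q)^2"

lemma memB: "hdil u (hmult (hinv q) p) \<in> Balpha \<alpha> \<longleftrightarrow> Gf u p q \<le> \<alpha>^2"
  unfolding Gf_def L1_def L2_def L3_def hdil_def hmult_def hinv_def Balpha_def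
  by (simp add: hx_def hy_def hz_def algebra_simps)

lemma aff:
  assumes "m + n = (1::real)"
  shows "L1 u p (m *\<^sub>R x + n *\<^sub>R y) = m * L1 u p x + n * L1 u p y"
    "L2 u p (m *\<^sub>R x + n *\<^sub>R y) = m * L2 u p x + n * L2 u p y"
    "L3 u p (m *\<^sub>R x + n *\<^sub>R y) = m * L3 u p x + n * L3 u p y"
proof -
  have n: "n = 1 - m" using assms by simp
  show "L1 u p (m *\<^sub>R x + n *\<^sub>R y) = m * L1 u p x + n * L1 u p y"
    unfolding n L1_def by (simp add: hx_def algebra_simps)
  show "L2 u p (m *\<^sub>R x + n *\<^sub>R y) = m * L2 u p x + n * L2 u p y"
    unfolding n L2_def by (simp add: hy_def algebra_simps)
  show "L3 u p (m *\<^sub>R x + n *\<^sub>R y) = m * L3 u p x + n * L3 u p y"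
    unfolding n L3_def by (simp add: hx_def hy_def hz_def algebra_simps diff_divide_distrib add_divide_distrib)
qed

lemma convT: "convex {q. Gf u p q \<le> \<alpha>^2}"
proof (rule convexI)
  fix x y and m n :: real
  assume x: "x \<in> {q. Gf u p q \<le> \<alpha>^2}" and y: "y \<in> {q. Gf u p q \<le> \<alpha>^2}"
    and "0 \<le> m" "0 \<le> n" "m + n = 1"
  hence mn: "0 \<le> m \<and> 0 \<le> n \<and> m + n = 1" by simp
  have "Gf u p (m *\<^sub>R x + n *\<^sub>R y) \<le> m * Gf u p x + n * Gf u p y"
    unfolding Gf_def aff[OF conjunct2[OF conjunct2[OF mn]]]
    using sqc[of m n "L1 u p x" "L1 u p y"] sqc[of m n "L2 u p x" "L2 u p y"]
      sqc[of m n "L3 u p x" "L3 u p y"] mn by (simp add: algebra_simps)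
  also have "\<dots> \<le> m * \<alpha>^2 + n * \<alpha>^2"
    using x y mn by (intro add_mono mult_left_mono) auto
  also have "\<dots> = (m + n) * \<alpha>^2" by (simp add: distrib_right)
  also have "\<dots> = \<alpha>^2" using mn by simp
  finally show "m *\<^sub>R x + n *\<^sub>R y \<in> {q. Gf u p q \<le> \<alpha>^2}" by simp
qed

lemma verts:
  fixes a b c z t u \<alpha> :: real
  assumes a: "\<alpha> > 0" and t: "t \<ge> 0" "t \<le> 1" "t*(1+\<alpha>+\<alpha>^2/4) \<le> 1"
    and G0: "Gf u (a,b,c) 0 \<le> \<alpha>^2" and z: "\<bar>z - c\<bar> \<le> \<bar>c\<bar>"
  shows "Gf u (a,b,c) (0,0,z) \<le> \<alpha>^2"
    "Gf u (a,b,c) (a - b * t, b + a * t, z) \<le> \<alpha>^2"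
    "Gf u (a,b,c) (a + b * t, b - a * t, z) \<le> \<alpha>^2"
    "Gf u (a,b,c) (2 * a, 2 * b, z) \<le> \<alpha>^2"
proof -
  define X where "X = u^2*(a^2+b^2)"
  define Y where "Y = u^2*\<bar>c\<bar>"
  define e where "e = u^2*(c - z)"
  have G0e: "Gf u (a,b,c) 0 = X + Y^2"
    unfolding Gf_def L1_def L2_def L3_def X_def Y_def
    by (simp add: hx_def hy_def hz_def power2_eq_square algebra_simps)
  have XY: "X + Y^2 \<le> \<alpha>^2" using G0 G0e by simp
  have X0: "X \<ge> 0" unfolding X_def by simp
  have eY: "\<bar>e\<bar> \<le> Y" unfolding e_def Y_def
    using z by (simp add: abs_mult mult_left_mono abs_minus_commute)
  have ee: "e^2 \<le> Y^2" using eY by (metis abs_ge_zero power2_abs power_mono)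
  have "Gf u (a,b,c) (0,0,z) = X + e^2"
    unfolding Gf_def L1_def L2_def L3_def X_def e_def
    by (simp add: hx_def hy_def hz_def power2_eq_square algebra_simps)
  thus "Gf u (a,b,c) (0,0,z) \<le> \<alpha>^2" using ee XY by linarith
  have "Gf u (a,b,c) (2 * a, 2 * b, z) = X + e^2"
    unfolding Gf_def L1_def L2_def L3_def X_def e_def
    by (simp add: hx_def hy_def hz_def power2_eq_square algebra_simps)
  thus "Gf u (a,b,c) (2 * a, 2 * b, z) \<le> \<alpha>^2" using ee XY by linarith
  have "Gf u (a,b,c) (a - b * t, b + a * t, z) = t^2*X + (e + 1*t*X/2)^2"
    unfolding Gf_def L1_def L2_def L3_def X_def e_def
    by (simp add: hx_def hy_def hz_def power2_eq_square field_simps)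
  thus "Gf u (a,b,c) (a - b * t, b + a * t, z) \<le> \<alpha>^2"
    using core[OF X0 eY XY t a, of 1] by simp
  have "Gf u (a,b,c) (a + b * t, b - a * t, z) = t^2*X + (e + (-1)*t*X/2)^2"
    unfolding Gf_def L1_def L2_def L3_def X_def e_def
    by (simp add: hx_def hy_def hz_def power2_eq_square field_simps)
  thus "Gf u (a,b,c) (a + b * t, b - a * t, z) \<le> \<alpha>^2"
    using core[OF X0 eY XY t a, of "-1"] by simp
qed

lemma G0form: "Gf u (a,b,c) 0 = (u*a)^2 + (u*b)^2 + (u^2*c)^2"
  unfolding Gf_def L1_def L2_def L3_def by (simp add: hx_def hy_def hz_def)

lemma hinv0: "hmult (hinv 0) p = p"
  by (cases p) (simp add: hmult_def hinv_def hx_def hy_def hz_def)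

lemma exG: fixes \<alpha> a b c :: real assumes a: "\<alpha> > 0"
  shows "\<exists>u>0. Gf u (a,b,c) 0 \<le> \<alpha>^2"
proof -
  define M where "M = \<bar>a\<bar> + \<bar>b\<bar> + \<bar>c\<bar> + 1"
  have M: "M > 0" unfolding M_def by simp
  define u where "u = min 1 (\<alpha>/M)"
  have u0: "u > 0" unfolding u_def using a M by simp
  have u1: "u \<le> 1" unfolding u_def by simp
  have uM: "u*M \<le> \<alpha>" unfolding u_def using M a
    by (metis min.cobounded2 mult_right_mono less_imp_le nonzero_eq_divide_eq order_less_irrefl mult.commute times_divide_eq_right)
  have c: "\<bar>u^2*c\<bar> \<le> u*\<bar>c\<bar>"
  proof -
    have "u^2 \<le> u" using u0 u1 by (simp add: power2_eq_square mult_left_le)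
    thus ?thesis using u0 by (simp add: abs_mult mult_right_mono)
  qed
  have "(u^2*c)^2 \<le> (u*\<bar>c\<bar>)^2" using c by (metis abs_ge_zero power2_abs power_mono)
  moreover have "(u*a)^2 = (u*\<bar>a\<bar>)^2" "(u*b)^2 = (u*\<bar>b\<bar>)^2"
    by (simp_all add: power2_eq_square abs_mult_self_eq)
  moreover have "(u*\<bar>a\<bar>)^2 + (u*\<bar>b\<bar>)^2 + (u*\<bar>c\<bar>)^2 \<le> (u*M)^2"
  proof -
    have "(u*\<bar>a\<bar>)^2 + (u*\<bar>b\<bar>)^2 + (u*\<bar>c\<bar>)^2 \<le> (u*\<bar>a\<bar> + u*\<bar>b\<bar> + u*\<bar>c\<bar>)^2"
      using u0 by (simp add: power2_eq_square algebra_simps)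
    also have "\<dots> \<le> (u*M)^2" unfolding M_def using u0
      by (intro power_mono) (simp_all add: algebra_simps)
    finally show ?thesis .
  qed
  moreover have "(u*M)^2 \<le> \<alpha>^2" using uM u0 M by (intro power_mono) auto
  ultimately have "Gf u (a,b,c) 0 \<le> \<alpha>^2" unfolding G0form by linarith
  thus ?thesis using u0 by blast
qed

theorem lemma5p1:
  fixes \<alpha> :: real
  assumes "\<alpha> > 0" and "is_distance (d_alpha \<alpha>)"
  shows "\<exists>\<theta>2. 0 < \<theta>2 \<and> \<theta>2 < pi / 2 \<and>
    (\<forall>\<theta> p z. 0 < \<theta> \<and> \<theta> \<le> \<theta>2 \<and> p \<noteq> 0 \<and> \<bar>z - hz p\<bar> \<le> \<bar>hz p\<bar> \<longrightarrow>
       Qset z p \<theta> \<subseteq> hball \<alpha> p (r_pt \<alpha> p))"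
proof -
  have a: "\<alpha> > 0" by fact
  define K where "K = 1 + \<alpha> + \<alpha>^2/4"
  have K1: "K \<ge> 1" unfolding K_def using a by simp
  define t0 where "t0 = 1 / K"
  have t00: "t0 > 0" unfolding t0_def using K1 by simp
  have t01: "t0 \<le> 1" unfolding t0_def using K1 by simp
  have t0K: "t0 * K = 1" unfolding t0_def using K1 by simp
  define \<theta>2 where "\<theta>2 = arctan t0"
  show ?thesis
  proof (intro exI[of _ \<theta>2] conjI allI impI)
    show "0 < \<theta>2" unfolding \<theta>2_def using t00 by simp
    show "\<theta>2 < pi/2" unfolding \<theta>2_def by (rule arctan_ubound)
    fix \<theta> p z
    assume H: "0 < \<theta> \<and> \<theta> \<le> \<theta>2 \<and> p \<noteq> 0 \<and> \<bar>z - hz p\<bar> \<le> \<bar>hz p\<bar>"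
    have th: "\<theta> < pi/2" using H arctan_ubound[of t0] unfolding \<theta>2_def by linarith
    define t where "t = tan \<theta>"
    have t0': "t > 0" unfolding t_def using H th by (simp add: tan_gt_zero)
    have "arctan t \<le> arctan t0" unfolding t_def using H th \<theta>2_def
      by (subst arctan_tan) (use pi_gt_zero in linarith)+
    hence tt0: "t \<le> t0" by (simp add: arctan_le_iff)
    have t1: "t \<le> 1" using tt0 t01 by simp
    have tK: "t * (1+\<alpha>+\<alpha>^2/4) \<le> 1"
      using mult_right_mono[OF tt0, of K] K1 t0K unfolding K_def by simp
    obtain a0 b0 c0 where p: "p = (a0,b0,c0)" by (cases p)
    have zc: "\<bar>z - c0\<bar> \<le> \<bar>c0\<bar>" using H p by (simp add: hz_def)
    have Q: "Qset z p \<theta> = convex hull {(0, 0, z), (a0 - b0 * t, b0 + a0 * t, z),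
              (a0 + b0 * t, b0 - a0 * t, z), (2 * a0, 2 * b0, z)}"
      unfolding Qset_def p t_def by (simp add: hx_def hy_def)
    show "Qset z p \<theta> \<subseteq> hball \<alpha> p (r_pt \<alpha> p)"
    proof
      fix x assume x: "x \<in> Qset z p \<theta>"
      define Sp where "Sp = {r. r > 0 \<and> hdil (1 / r) (hmult (hinv 0) p) \<in> Balpha \<alpha>}"
      define Sx where "Sx = {r. r > 0 \<and> hdil (1 / r) (hmult (hinv x) p) \<in> Balpha \<alpha>}"
      have sub: "Sp \<subseteq> Sx"
      proof
        fix r assume r: "r \<in> Sp"
        hence r0: "r > 0" and G0: "Gf (1/r) (a0,b0,c0) 0 \<le> \<alpha>^2"
          unfolding Sp_def memB p by auto
        have "convex hull {(0, 0, z), (a0 - b0 * t, b0 + a0 * t, z),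
              (a0 + b0 * t, b0 - a0 * t, z), (2 * a0, 2 * b0, z)} \<subseteq> {q. Gf (1/r) (a0,b0,c0) q \<le> \<alpha>^2}"
          using verts[OF a less_imp_le[OF t0'] t1 tK G0 zc] convT
          by (intro hull_minimal) auto
        hence "Gf (1/r) (a0,b0,c0) x \<le> \<alpha>^2" using x Q by auto
        thus "r \<in> Sx" unfolding Sx_def memB p using r0 by simp
      qed
      obtain u where u: "u > 0" "Gf u (a0,b0,c0) 0 \<le> \<alpha>^2" using exG[OF a] by blast
      have "1/u \<in> Sp" unfolding Sp_def memB p using u by simp
      hence ne: "Sp \<noteq> {}" by blast
      have bd: "bdd_below Sx" unfolding Sx_def by (rule bdd_belowI[of _ 0]) auto
      have "Inf Sx \<le> Inf Sp" by (rule cInf_superset_mono[OF ne bd sub])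
      thus "x \<in> hball \<alpha> p (r_pt \<alpha> p)"
        unfolding hball_def r_pt_def d_alpha_def Sx_def Sp_def by simp
    qed
  qed
qed

end
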